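(* Let $n\ge1$ and $0<\epsilon\le 1$. Every symmetric pseudo-Boolean function $f:\{0,1\}^n\to\mathbb{R}$, with $f(x)=k_{|x|}$, can be represented uniquely in the form \[ f(x)=\sum_{i=0}^{n}\alpha_i\,\min\Bigl(0,\; i-\epsilon-\sum_{r=1}^n x_r\Bigr)\quad\text{for all }x\in\{0,1\}^n, \] and the coefficients are, for $j=0,1,\ldots,n$, \[ \alpha_j=-\sum_{i=0}^{j-2}\frac{(\epsilon-1)^{j-i-2}}{\epsilon^{j-i+1}}\,k_i+\Bigl(\frac1\epsilon+\frac1{\epsilon^2}\Bigr)k_{j-1}-\frac1\epsilon k_j, \] where the first sum is $0$ when $j<2$ and $k_{-1}:=0$.
   Context: A pseudo-Boolean function is a map $\{0,1\}^n\to\mathbb{R}$; it is symmetric if there are reals $k_0,\ldots,k_n$ with $f(x)=k_l$ whenever the Hamming weight $|x|=\sum_j x_j$ equals $l$. The expression $(\epsilon-1)^0$ is interpreted as $1$ (also when $\epsilon=1$). *)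

theory Defs
  imports Complex_Main "HOL-Library.FuncSet"
begin

definition cube :: "nat \<Rightarrow> (nat \<Rightarrow> nat) set" where
  "cube n = {1..n} \<rightarrow>\<^sub>E {0, 1}"

definition hweight :: "nat \<Rightarrow> (nat \<Rightarrow> nat) \<Rightarrow> nat" where
  "hweight n x = (\<Sum>r = 1..n. x r)"

definition alpha_coeff :: "real \<Rightarrow> (nat \<Rightarrow> real) \<Rightarrow> nat \<Rightarrow> real" where
  "alpha_coeff \<epsilon> k j =
     - (\<Sum>i\<in>{i. i + 2 \<le> j}. (\<epsilon> - 1) ^ (j - i - 2) / \<epsilon> ^ (j - i + 1) * k i)
     + (1 / \<epsilon> + 1 / \<epsilon>\<^sup>2) * (if j = 0 then 0 else k (j - 1))
     - (1 / \<epsilon>) * k j"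

end

theory Submission
  imports Defs
begin

definition TT :: "real \<Rightarrow> (nat \<Rightarrow> real) \<Rightarrow> nat \<Rightarrow> real" where
  "TT e a m = (\<Sum>i = 0..m. a i * (real i - e - real m))"

lemma TT_Suc: "TT e a (Suc m) = TT e a m - e * a (Suc m) - (\<Sum>i = 0..m. a i)"
proof -
  have "(\<Sum>i = 0..m. a i * (real i - e - real (Suc m))) = (\<Sum>i = 0..m. a i * (real i - e - real m) - a i)"
    by (intro sum.cong) (auto simp: algebra_simps)
  hence "(\<Sum>i = 0..m. a i * (real i - e - real (Suc m))) = TT e a m - (\<Sum>i = 0..m. a i)"
    unfolding TT_def by (simp add: sum_subtractf)
  thus ?thesis unfolding TT_def[of e a "Suc m"] by (simp add: algebra_simps)
qed

lemma TT_2nd: "TT e a (Suc (Suc m)) - 2 * TT e a (Suc m) + TT e a m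
   = - e * a (Suc (Suc m)) + (e - 1) * a (Suc m)"
  using TT_Suc[of e a "Suc m"] TT_Suc[of e a m] by (simp add: algebra_simps)

lemma TT_uniq:
  assumes "e \<noteq> 0" "\<forall>m\<le>n. TT e a m = TT e b m"
  shows "\<forall>m\<le>n. a m = b m"
proof -
  have "\<forall>j\<le>m. a j = b j" if "m \<le> n" for m
    using that
  proof (induction m)
    case 0
    have "TT e a 0 = TT e b 0" using assms(2) by simp
    then show ?case using assms(1) by (simp add: TT_def)
  next
    case (Suc m)
    hence IH: "\<forall>j\<le>m. a j = b j" by simp
    have s: "(\<Sum>i = 0..m. a i) = (\<Sum>i = 0..m. b i)" using IH by (intro sum.cong) auto
    have t: "TT e a m = TT e b m" unfolding TT_def using IH by (intro sum.cong) auto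
    have "TT e a (Suc m) = TT e b (Suc m)" using assms Suc.prems by auto
    hence "a (Suc m) = b (Suc m)" using TT_Suc[of e a m] TT_Suc[of e b m] s t assms(1) by simp
    thus ?case using IH le_Suc_eq by auto
  qed
  thus ?thesis by auto
qed

definition QQ :: "real \<Rightarrow> (nat \<Rightarrow> real) \<Rightarrow> nat \<Rightarrow> real" where
  "QQ e k m = (\<Sum>i\<le>m. (e - 1) ^ (m - i) / e ^ (m + 3 - i) * k i)"

lemma P_QQ: "(\<Sum>i\<in>{i. i + 2 \<le> m + 2}. (e - 1) ^ (m + 2 - i - 2) / e ^ (m + 2 - i + 1) * k i) = QQ e k m"
proof -
  have "{i. i + 2 \<le> m + 2} = {..m}" by auto
  thus ?thesis unfolding QQ_def
  proof (intro sum.cong)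
    fix i assume "i \<in> {..m}"
    hence "m + 2 - i - 2 = m - i" "m + 2 - i + 1 = m + 3 - i" by auto
    thus "(e - 1) ^ (m + 2 - i - 2) / e ^ (m + 2 - i + 1) * k i = (e - 1) ^ (m - i) / e ^ (m + 3 - i) * k i" by simp
  qed
qed

lemma P_0: "{i::nat. i + 2 \<le> 0} = {}" and P_1: "{i::nat. i + 2 \<le> 1} = {}" by auto

lemma QQ_Suc: assumes "e \<noteq> 0"
  shows "e * QQ e k (Suc m) = (e - 1) * QQ e k m + k (Suc m) / e^2"
proof -
  have "QQ e k (Suc m) = (\<Sum>i\<le>m. (e - 1) ^ (Suc m - i) / e ^ (Suc m + 3 - i) * k i) + k (Suc m) / e^3"
    unfolding QQ_def by simp
  also have "(\<Sum>i\<le>m. (e - 1) ^ (Suc m - i) / e ^ (Suc m + 3 - i) * k i)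
     = (\<Sum>i\<le>m. (e - 1) / e * ((e - 1) ^ (m - i) / e ^ (m + 3 - i) * k i))"
  proof (intro sum.cong refl)
    fix i assume "i \<in> {..m}"
    hence "Suc m - i = Suc (m - i)" "Suc m + 3 - i = Suc (m + 3 - i)" by auto
    thus "(e - 1) ^ (Suc m - i) / e ^ (Suc m + 3 - i) * k i = (e - 1) / e * ((e - 1) ^ (m - i) / e ^ (m + 3 - i) * k i)"
      by simp
  qed
  also have "\<dots> = (e - 1) / e * QQ e k m" unfolding QQ_def by (simp add: sum_distrib_left)
  finally show ?thesis using assms by (simp add: field_simps power3_eq_cube power2_eq_square)
qed

lemma c_rec: assumes "e \<noteq> 0"
  shows "- e * alpha_coeff e k (Suc (Suc m)) + (e - 1) * alpha_coeff e k (Suc m)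
     = k (Suc (Suc m)) - 2 * k (Suc m) + k m"
proof -
  have A: "alpha_coeff e k (Suc (Suc m)) = - QQ e k m + (1/e + 1/e^2) * k (Suc m) - 1/e * k (Suc (Suc m))"
    unfolding alpha_coeff_def using P_QQ[of e m k] by (simp add: add.commute)
  have key: "e * QQ e k m = (e - 1) * (if m = 0 then 0 else QQ e k (m - 1)) + k m / e^2"
  proof (cases m)
    case 0 then show ?thesis using assms by (simp add: QQ_def power2_eq_square power3_eq_cube)
  next
    case (Suc m') then show ?thesis using QQ_Suc[OF assms, of k m'] by simp
  qed
  have B: "alpha_coeff e k (Suc m) = - (if m = 0 then 0 else QQ e k (m - 1)) + (1/e + 1/e^2) * k m - 1/e * k (Suc m)"
  proof (cases m)
    case 0 then show ?thesis unfolding alpha_coeff_def by (simp add: P_1)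
  next
    case (Suc m')
    then show ?thesis unfolding alpha_coeff_def using P_QQ[of e m' k]
      by (simp add: add.commute)
  qed
  define R where "R = (if m = 0 then 0 else QQ e k (m - 1))"
  have Q: "QQ e k m = ((e - 1) * R + k m / e^2) / e" using key assms unfolding R_def by (simp add: field_simps)
  show ?thesis unfolding A B Q R_def[symmetric] using assms
    by (simp add: field_simps power2_eq_square)
qed

lemma TT_c: assumes "e \<noteq> 0" shows "TT e (alpha_coeff e k) m = k m"
proof -
  have "TT e (alpha_coeff e k) m = k m \<and> TT e (alpha_coeff e k) (Suc m) = k (Suc m)"
  proof (induction m)
    case 0
    have a0: "alpha_coeff e k 0 = - k 0 / e" unfolding alpha_coeff_def by (simp add: P_0)
    have a1: "alpha_coeff e k (Suc 0) = (1/e + 1/e^2) * k 0 - k 1 / e" unfolding alpha_coeff_def by (simp add: P_1)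
    show ?case using assms unfolding TT_def by (simp add: a0 a1 field_simps power2_eq_square)
  next
    case (Suc m)
    then show ?case using TT_2nd[of e "alpha_coeff e k" m] c_rec[OF assms, of k m] by simp
  qed
  thus ?thesis by simp
qed

lemma min_sum:
  assumes "m \<le> n" "0 < e" "e \<le> 1"
  shows "(\<Sum>i = 0..n. a i * min 0 (real i - e - real m)) = TT e a m"
proof -
  have "(\<Sum>i = 0..n. a i * min 0 (real i - e - real m))
     = (\<Sum>i = 0..n. if i \<in> {..m} then a i * (real i - e - real m) else 0)"
  proof (intro sum.cong refl)
    fix i assume "i \<in> {0..n}"
    show "a i * min 0 (real i - e - real m) = (if i \<in> {..m} then a i * (real i - e - real m) else 0)"
    proof (cases "i \<le> m")
      case True then have "real i \<le> real m" by simp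
      then show ?thesis using True assms by simp
    next
      case False then have "real i \<ge> real m + 1" by simp
      then show ?thesis using False assms by simp
    qed
  qed
  also have "\<dots> = (\<Sum>i \<in> {0..n} \<inter> {..m}. a i * (real i - e - real m))"
    by (rule sum.inter_restrict[symmetric]) simp
  also have "{0..n} \<inter> {..m} = {0..m}" using assms by auto
  finally show ?thesis unfolding TT_def .
qed

lemma hweight_le: assumes "x \<in> cube n" shows "hweight n x \<le> n"
proof -
  have "hweight n x \<le> (\<Sum>r = 1..n. 1)" unfolding hweight_def
    using assms unfolding cube_def by (intro sum_mono) (force simp: PiE_iff)
  thus ?thesis by simp
qed

lemma hweight_attain: assumes "m \<le> n" shows "\<exists>x\<in>cube n. hweight n x = m"
proof
  let ?x = "\<lambda>r\<in>{1..n}. if r \<le> m then 1 else (0::nat)"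
  show "?x \<in> cube n" unfolding cube_def by auto
  have "hweight n ?x = (\<Sum>r = 1..n. if r \<in> {..m} then 1 else 0)" unfolding hweight_def
    by (intro sum.cong) auto
  also have "\<dots> = (\<Sum>r \<in> {1..n} \<inter> {..m}. 1)" by (rule sum.inter_restrict[symmetric]) simp
  also have "\<dots> = card ({1..n} \<inter> {..m})" by simp
  also have "{1..n} \<inter> {..m} = {1..m}" using assms by auto
  also have "card {1..m} = m" by simp
  finally show "hweight n ?x = m" .
qed

theorem theorem2:
  fixes n :: nat and \<epsilon> :: real and f :: "(nat \<Rightarrow> nat) \<Rightarrow> real" and k :: "nat \<Rightarrow> real"
  assumes "n \<ge> 1" and "0 < \<epsilon>" and "\<epsilon> \<le> 1"
    and sym: "\<forall>x\<in>cube n. f x = k (hweight n x)"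
  shows "\<forall>\<alpha> :: nat \<Rightarrow> real.
           (\<forall>x\<in>cube n. f x = (\<Sum>i = 0..n. \<alpha> i * min 0 (real i - \<epsilon> - real (hweight n x))))
           \<longleftrightarrow> (\<forall>j \<le> n. \<alpha> j = alpha_coeff \<epsilon> k j)"
proof (intro allI)
  fix \<alpha> :: "nat \<Rightarrow> real"
  have e0: "\<epsilon> \<noteq> 0" using assms by simp
  have "(\<forall>x\<in>cube n. f x = (\<Sum>i = 0..n. \<alpha> i * min 0 (real i - \<epsilon> - real (hweight n x))))
      \<longleftrightarrow> (\<forall>m\<le>n. k m = TT \<epsilon> \<alpha> m)"
  proof
    assume H: "\<forall>x\<in>cube n. f x = (\<Sum>i = 0..n. \<alpha> i * min 0 (real i - \<epsilon> - real (hweight n x)))"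
    show "\<forall>m\<le>n. k m = TT \<epsilon> \<alpha> m"
    proof (intro allI impI)
      fix m assume "m \<le> n"
      then obtain x where x: "x \<in> cube n" "hweight n x = m" using hweight_attain by blast
      show "k m = TT \<epsilon> \<alpha> m" using H sym x min_sum[OF \<open>m \<le> n\<close> assms(2,3)] by metis
    qed
  next
    assume H: "\<forall>m\<le>n. k m = TT \<epsilon> \<alpha> m"
    show "\<forall>x\<in>cube n. f x = (\<Sum>i = 0..n. \<alpha> i * min 0 (real i - \<epsilon> - real (hweight n x)))"
      using H sym hweight_le min_sum[OF _ assms(2,3)] by metis
  qed
  also have "\<dots> \<longleftrightarrow> (\<forall>m\<le>n. TT \<epsilon> \<alpha> m = TT \<epsilon> (alpha_coeff \<epsilon> k) m)"
    using TT_c[OF e0] by metis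
  also have "\<dots> \<longleftrightarrow> (\<forall>j \<le> n. \<alpha> j = alpha_coeff \<epsilon> k j)"
  proof
    assume "\<forall>m\<le>n. TT \<epsilon> \<alpha> m = TT \<epsilon> (alpha_coeff \<epsilon> k) m"
    thus "\<forall>j \<le> n. \<alpha> j = alpha_coeff \<epsilon> k j" using TT_uniq[OF e0] by blast
  next
    assume H: "\<forall>j \<le> n. \<alpha> j = alpha_coeff \<epsilon> k j"
    show "\<forall>m\<le>n. TT \<epsilon> \<alpha> m = TT \<epsilon> (alpha_coeff \<epsilon> k) m"
      unfolding TT_def using H by (auto intro!: sum.cong)
  qed
  finally show "(\<forall>x\<in>cube n. f x = (\<Sum>i = 0..n. \<alpha> i * min 0 (real i - \<epsilon> - real (hweight n x))))
           \<longleftrightarrow> (\<forall>j \<le> n. \<alpha> j = alpha_coeff \<epsilon> k j)" .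
qed

end
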